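(* With $W=\mathrm{inv}(\pi)$ and $W^\ast=\mathrm{inv}(\pi^\ast)$ as constructed in the context, \[\mathrm{Var}\bigl(\mathbb{E}(W^\ast-W\mid\pi)\bigr)\le\frac{Cn^5}{\bigl(n^2-\sum_a n_a^2\bigr)^2}\] for an absolute constant $C$ (independent of $h$, $n$ and the $n_a$). Here $\mathbb{E}(\cdot\mid\pi)$ averages over the auxiliary randomness $I,J,i^\ast,j^\ast$.
   Context: Let $h\ge 2$, let $n_1,\dots,n_h$ be positive integers, $n=n_1+\dots+n_h\ge 4$, and let $\pi$ be a uniformly distributed permutation of the multiset $\{1^{n_1},\dots,h^{n_h}\}$ (a sequence $(\pi(1),\dots,\pi(n))$ in which each $a$ occurs $n_a$ times, all such sequences equally likely). $\mathrm{inv}(\pi)$ is the number of pairs $i<j$ with $\pi(i)>\pi(j)$. Construction of $\pi^\ast$: Let $I$ be uniformly distributed over pairs $(i,j)$ with $1\le i<j\le n$; let $J=(a,b)$, for $h\ge a>b\ge 1$, with probability $n_an_b/\sum_{c<d}n_cn_d$; $\pi,I,J$ are independent. If $I=(i,j)$ and $\pi(i)>\pi(j)$, set $\pi^\ast=\pi$. If $I=(i,j)$, $\pi(i)\le\pi(j)$ and $J=(a,b)$: choose $i^\ast$ uniformly from $\{k:\pi(k)=a\}$ and $j^\ast$ uniformly from $\{k:\pi(k)=b\}$, independently of each other and of all else. Then: (1) if $\{i,j\}\cap\{i^\ast,j^\ast\}=\emptyset$, or $i=i^\ast,j\ne j^\ast$, or $i\ne i^\ast,j=j^\ast$, obtain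 $\pi^\ast$ from $\pi$ by exchanging the entries at positions $i$ and $i^\ast$ and exchanging the entries at positions $j$ and $j^\ast$; (2) if $i=j^\ast$ and $j=i^\ast$, obtain $\pi^\ast$ by exchanging the entries at positions $i$ and $j$; (3) if $i=j^\ast$, $j\ne i^\ast$, set $\pi^\ast(i)=\pi(i^\ast)$, $\pi^\ast(j)=\pi(i)$, $\pi^\ast(i^\ast)=\pi(j)$, and $\pi^\ast(k)=\pi(k)$ for $k\notin\{i,j,i^\ast\}$; (4) if $i\ne j^\ast$, $j=i^\ast$, set $\pi^\ast(i)=\pi(j)$, $\pi^\ast(j)=\pi(j^\ast)$, $\pi^\ast(j^\ast)=\pi(i)$, and $\pi^\ast(k)=\pi(k)$ for $k\notin\{i,j,j^\ast\}$. *)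

theory Defs
  imports Complex_Main
begin

text \<open>Permutations of the multiset with colours 1..h, colour a occurring cnt a times,
  represented as lists (positions 0-indexed).\<close>
definition msperms :: "nat \<Rightarrow> (nat \<Rightarrow> nat) \<Rightarrow> nat list set" where
  "msperms h cnt = {xs. length xs = (\<Sum>a=1..h. cnt a) \<and> set xs \<subseteq> {1..h} \<and>
      (\<forall>a\<in>{1..h}. count_list xs a = cnt a)}"

definition inv_count :: "nat list \<Rightarrow> nat" where
  "inv_count xs = card {(i,j). i < j \<and> j < length xs \<and> xs!i > xs!j}"

text \<open>The switched sequence, for given positions i<j (with xs!i <= xs!j) and chosen
  positions is (value a) and js (value b), following cases (1)--(4).\<close>
definition pi_star :: "nat list \<Rightarrow> nat \<Rightarrow> nat \<Rightarrow> nat \<Rightarrow> nat \<Rightarrow> nat list" where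
  "pi_star xs i j is js =
     (if i = js \<and> j = is then xs[i := xs!j, j := xs!i]
      else if i = js \<and> j \<noteq> is then xs[i := xs!is, j := xs!i, is := xs!j]
      else if i \<noteq> js \<and> j = is then xs[i := xs!j, j := xs!js, js := xs!i]
      else (let ys = xs[i := xs!is, is := xs!i] in ys[j := ys!js, js := ys!j]))"

text \<open>E(W* - W | pi): average over I, J, i*, j*.\<close>
definition cond_drift :: "nat \<Rightarrow> (nat \<Rightarrow> nat) \<Rightarrow> nat list \<Rightarrow> real" where
  "cond_drift h cnt xs =
    (let n = length xs;
         PI = {(i,j). i < j \<and> j < n};
         PJ = {(a,b). 1 \<le> b \<and> b < a \<and> a \<le> h};
         S = (\<Sum>(a,b)\<in>PJ. real (cnt a * cnt b))
     in (\<Sum>(i,j)\<in>PI. (1 / real (card PI)) *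
           (if xs!i > xs!j then 0
            else (\<Sum>(a,b)\<in>PJ. (real (cnt a * cnt b) / S) *
                    (\<Sum>is\<in>{k. k < n \<and> xs!k = a}. \<Sum>js\<in>{k. k < n \<and> xs!k = b}.
                       (1 / real (cnt a * cnt b)) *
                       (real (inv_count (pi_star xs i j is js)) - real (inv_count xs)))))))"

definition expect_perm :: "nat \<Rightarrow> (nat \<Rightarrow> nat) \<Rightarrow> (nat list \<Rightarrow> real) \<Rightarrow> real" where
  "expect_perm h cnt f = (\<Sum>xs\<in>msperms h cnt. f xs) / real (card (msperms h cnt))"

definition var_perm :: "nat \<Rightarrow> (nat \<Rightarrow> nat) \<Rightarrow> (nat list \<Rightarrow> real) \<Rightarrow> real" where
  "var_perm h cnt f = expect_perm h cnt (\<lambda>xs. (f xs - expect_perm h cnt f)^2)"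

end

theory Submission
  imports Defs "HOL-Combinatorics.Multiset_Permutations"
begin



definition lswap :: "'a list \<Rightarrow> nat \<Rightarrow> nat \<Rightarrow> 'a list" where
  "lswap xs p q = xs[p := xs!q, q := xs!p]"

lemma lswap_length[simp]: "length (lswap xs p q) = length xs"
  by (simp add: lswap_def)

lemma lswap_nth: "p < length xs \<Longrightarrow> q < length xs \<Longrightarrow>
  lswap xs p q ! m = (if m = q then xs!p else if m = p then xs!q else xs!m)"
  by (auto simp: lswap_def nth_list_update)

lemma mset_lswap: "p < length xs \<Longrightarrow> q < length xs \<Longrightarrow> mset (lswap xs p q) = mset xs"
  unfolding lswap_def by (rule mset_swap)

lemma lswap_Cons: "lswap (v#ys) (Suc p) (Suc q) = v # lswap ys p q"
  by (simp add: lswap_def)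

lemma lswap_invol: "p < length xs \<Longrightarrow> q < length xs \<Longrightarrow> lswap (lswap xs p q) p q = xs"
  by (rule nth_equalityI) (auto simp: lswap_nth)

lemma sq_decomp:
  fixes g :: "'b \<Rightarrow> real"
  assumes "finite X"
  shows "(\<Sum>x\<in>X. (g x - d)^2) = (\<Sum>x\<in>X. (g x - sum g X / card X)^2) + card X * (sum g X / card X - d)^2"
proof (cases "X = {}")
  case True then show ?thesis by simp
next
  case False
  define c where "c = sum g X / card X"
  have cX: "card X > 0" using False assms by (simp add: card_gt_0_iff)
  have s0: "(\<Sum>x\<in>X. (g x - c)) = 0"
    using cX by (simp add: sum_subtractf c_def)
  have "(\<Sum>x\<in>X. (g x - d)^2) = (\<Sum>x\<in>X. (g x - c)^2 + 2 * (c - d) * (g x - c) + (c - d)^2)"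
    by (rule sum.cong) (auto simp: power2_eq_square algebra_simps)
  also have "\<dots> = (\<Sum>x\<in>X. (g x - c)^2) + 2 * (c - d) * (\<Sum>x\<in>X. (g x - c)) + card X * (c - d)^2"
    by (simp add: sum.distrib sum_distrib_left)
  finally show ?thesis using s0 by (simp add: c_def)
qed




lemma perm_A_reindex:
  assumes "v \<in># M"
  shows "{xs \<in> permutations_of_multiset M. xs!0 = v} = (#) v ` permutations_of_multiset (M - {#v#})"
proof -
  have "M \<noteq> {#}" using assms by auto
  show ?thesis
  proof (intro set_eqI iffI)
    fix xs assume xs: "xs \<in> {xs \<in> permutations_of_multiset M. xs!0 = v}"
    then have "xs \<noteq> []" using \<open>M \<noteq> {#}\<close> by (auto simp: permutations_of_multiset_def)
    then obtain y ys where "xs = y # ys" by (cases xs) auto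
    then show "xs \<in> (#) v ` permutations_of_multiset (M - {#v#})"
      using xs by (auto simp: permutations_of_multiset_Cons_iff)
  next
    fix xs assume "xs \<in> (#) v ` permutations_of_multiset (M - {#v#})"
    then show "xs \<in> {xs \<in> permutations_of_multiset M. xs!0 = v}"
      using assms by (auto simp: permutations_of_multiset_Cons_iff)
  qed
qed

lemma perm_nonempty: "permutations_of_multiset M \<noteq> {}"
  using ex_mset[of M] by (auto simp: permutations_of_multiset_def)

lemma card_pos_count:
  assumes "xs \<in> permutations_of_multiset M"
  shows "card {m. m < size M \<and> xs!m = w} = count M w"
proof -
  have "mset xs = M" using assms by (simp add: permutations_of_multiset_def)
  then have l: "length xs = size M" by auto
  have "card {m. m < length xs \<and> xs!m = w} = length (filter ((=) w) xs)"
    by (simp add: length_filter_conv_card eq_commute)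
  also have "\<dots> = count_list xs w" by (simp add: count_list_eq_length_filter)
  also have "\<dots> = count M w" using \<open>mset xs = M\<close> by (simp add: count_mset[symmetric])
  finally show ?thesis using l by simp
qed

lemma mean_diff:
  fixes f :: "'a list \<Rightarrow> real"
  assumes L: "\<And>xs p q. xs \<in> permutations_of_multiset M \<Longrightarrow> p < size M \<Longrightarrow> q < size M \<Longrightarrow> \<bar>f (lswap xs p q) - f xs\<bar> \<le> L"
    and v: "v \<in># M" and w: "w \<in># M" and vw: "v \<noteq> w"
  defines "A \<equiv> \<lambda>u. {xs \<in> permutations_of_multiset M. xs!0 = u}"
  shows "\<bar>sum f (A w) / card (A w) - sum f (A v) / card (A v)\<bar> \<le> L"
proof -
  let ?P = "permutations_of_multiset M"
  have sM: "size M > 0" using v by (metis gr0I multiset_nonemptyE size_eq_0_iff_empty empty_iff set_mset_empty)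
  define R where "R = Sigma (A v) (\<lambda>xs. {m. m < size M \<and> xs!m = w})"
  define R' where "R' = Sigma (A w) (\<lambda>xs. {m. m < size M \<and> xs!m = v})"
  have finA: "finite (A u)" for u unfolding A_def by simp
  have lenP: "xs \<in> ?P \<Longrightarrow> length xs = size M" for xs
    by (simp add: length_finite_permutations_of_multiset)
  have finR: "finite R" unfolding R_def using finA by auto
  have finR': "finite R'" unfolding R'_def using finA by auto
  have cardA: "card (A u) > 0" if "u \<in># M" for u
  proof -
    have "A u = (#) u ` permutations_of_multiset (M - {#u#})"
      unfolding A_def by (rule perm_A_reindex[OF that])
    then have "A u \<noteq> {}" using perm_nonempty by auto
    then show ?thesis using finA by (simp add: card_gt_0_iff)
  qed
  have sumR: "(\<Sum>(xs,m)\<in>R. g xs) = count M w * sum g (A v)" for g :: "'a list \<Rightarrow> real"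
  proof -
    have "(\<Sum>(xs,m)\<in>R. g xs) = (\<Sum>xs\<in>A v. \<Sum>m\<in>{m. m < size M \<and> xs!m = w}. g xs)"
      unfolding R_def by (subst sum.Sigma) (use finA in auto)
    also have "\<dots> = (\<Sum>xs\<in>A v. count M w * g xs)"
      by (rule sum.cong) (auto simp: A_def card_pos_count)
    finally show ?thesis by (simp add: sum_distrib_left)
  qed
  have sumR': "(\<Sum>(xs,m)\<in>R'. g xs) = count M v * sum g (A w)" for g :: "'a list \<Rightarrow> real"
  proof -
    have "(\<Sum>(xs,m)\<in>R'. g xs) = (\<Sum>xs\<in>A w. \<Sum>m\<in>{m. m < size M \<and> xs!m = v}. g xs)"
      unfolding R'_def by (subst sum.Sigma) (use finA in auto)
    also have "\<dots> = (\<Sum>xs\<in>A w. count M v * g xs)"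
      by (rule sum.cong) (auto simp: A_def card_pos_count)
    finally show ?thesis by (simp add: sum_distrib_left)
  qed
  have bij: "(\<Sum>(xs,m)\<in>R. g (lswap xs 0 m)) = (\<Sum>(xs,m)\<in>R'. g xs)" for g :: "'a list \<Rightarrow> real"
  proof (rule sum.reindex_bij_witness[where i = "\<lambda>(xs,m). (lswap xs 0 m, m)" and j = "\<lambda>(xs,m). (lswap xs 0 m, m)"])
    fix a assume "a \<in> R'"
    then show "(case (case a of (xs, m) \<Rightarrow> (lswap xs 0 m, m)) of (xs, m) \<Rightarrow> (lswap xs 0 m, m)) = a"
      unfolding R'_def A_def using sM
      by (auto simp: lenP lswap_invol)
  next
    fix a assume "a \<in> R'"
    then obtain xs m where a: "a = (xs, m)" "xs \<in> ?P" "xs!0 = w" "m < size M" "xs!m = v"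
      unfolding R'_def A_def by auto
    have l: "length xs = size M" using a lenP by auto
    have "lswap xs 0 m \<in> ?P" using a l sM
      by (simp add: permutations_of_multiset_def mset_lswap)
    moreover have "lswap xs 0 m ! 0 = v" "lswap xs 0 m ! m = w" using a l sM vw by (auto simp: lswap_nth intro!: gr0I)
    ultimately show "(case a of (xs, m) \<Rightarrow> (lswap xs 0 m, m)) \<in> R"
      unfolding R_def A_def using a by auto
  next
    fix a assume "a \<in> R"
    then show "(case (case a of (xs, m) \<Rightarrow> (lswap xs 0 m, m)) of (xs, m) \<Rightarrow> (lswap xs 0 m, m)) = a"
      unfolding R_def A_def using sM
      by (auto simp: lenP lswap_invol)
  next
    fix a assume "a \<in> R"
    then obtain xs m where a: "a = (xs, m)" "xs \<in> ?P" "xs!0 = v" "m < size M" "xs!m = w"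
      unfolding R_def A_def by auto
    have l: "length xs = size M" using a lenP by auto
    have "lswap xs 0 m \<in> ?P" using a l sM
      by (simp add: permutations_of_multiset_def mset_lswap)
    moreover have "lswap xs 0 m ! 0 = w" "lswap xs 0 m ! m = v" using a l sM vw by (auto simp: lswap_nth intro!: gr0I)
    ultimately show "(case a of (xs, m) \<Rightarrow> (lswap xs 0 m, m)) \<in> R'"
      unfolding R'_def A_def using a by auto
  qed (auto split: prod.splits)
  have cR: "real (card R) = real (count M w) * real (card (A v))" using sumR[of "\<lambda>_. 1"] by simp
  have cR': "real (card R) = real (count M v) * real (card (A w))"
    using sumR'[of "\<lambda>_. 1"] bij[of "\<lambda>_. 1"] by simp
  have diff: "\<bar>\<Sum>(xs,m)\<in>R. f (lswap xs 0 m) - f xs\<bar> \<le> card R * L"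
  proof -
    have "\<bar>\<Sum>(xs,m)\<in>R. f (lswap xs 0 m) - f xs\<bar> \<le> (\<Sum>(xs,m)\<in>R. \<bar>f (lswap xs 0 m) - f xs\<bar>)"
      by (rule order_trans[OF sum_abs]) (simp add: case_prod_beta)
    also have "\<dots> \<le> (\<Sum>(xs,m)\<in>R. L)"
      by (rule sum_mono) (use sM in \<open>auto simp: R_def A_def intro!: L\<close>)
    finally show ?thesis by simp
  qed
  have e: "(\<Sum>(xs,m)\<in>R. f (lswap xs 0 m) - f xs) = count M v * sum f (A w) - count M w * sum f (A v)"
    using bij[of f] sumR[of f] sumR'[of f]
    by (simp add: sum_subtractf case_prod_beta)
  have cw: "count M w > 0" "count M v > 0" using v w by auto
  have Rpos: "real (card R) > 0" using cR cw cardA[OF v] by simp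
  have "sum f (A w) / card (A w) - sum f (A v) / card (A v)
      = (count M v * sum f (A w) - count M w * sum f (A v)) / card R"
  proof -
    have "sum f (A w) / card (A w) = count M v * sum f (A w) / card R"
      using cR' cw cardA[OF w] by (simp add: field_simps)
    moreover have "sum f (A v) / card (A v) = count M w * sum f (A v) / card R"
      using cR cw cardA[OF v] by (simp add: field_simps)
    ultimately show ?thesis by (simp add: diff_divide_distrib)
  qed
  then have "\<bar>sum f (A w) / card (A w) - sum f (A v) / card (A v)\<bar> = \<bar>\<Sum>(xs,m)\<in>R. f (lswap xs 0 m) - f xs\<bar> / card R"
    using e by simp
  also have "\<dots> \<le> L" using diff Rpos by (simp add: divide_le_eq mult.commute)
  finally show ?thesis .
qed




lemma var_bound:
  fixes f :: "'a list \<Rightarrow> real" and L :: real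
  assumes "\<And>xs p q. xs \<in> permutations_of_multiset M \<Longrightarrow> p < size M \<Longrightarrow> q < size M \<Longrightarrow> \<bar>f (lswap xs p q) - f xs\<bar> \<le> L"
  shows "(\<Sum>xs\<in>permutations_of_multiset M. (f xs - sum f (permutations_of_multiset M) / card (permutations_of_multiset M))^2)
          \<le> real (card (permutations_of_multiset M)) * real (size M) * L^2"
  using assms
proof (induction "size M" arbitrary: M f)
  case 0
  then show ?case by simp
next
  case (Suc n M f)
  let ?P = "permutations_of_multiset M"
  define A where "A = (\<lambda>u. {xs \<in> ?P. xs!0 = u})"
  define V where "V = set_mset M"
  define mu where "mu = (\<lambda>u. sum f (A u) / card (A u))"
  define mm where "mm = sum f ?P / card ?P"
  have sM: "size M > 0" using Suc by simp
  have finV: "finite V" by (simp add: V_def)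
  have finA: "finite (A u)" for u unfolding A_def by simp
  have lenP: "xs \<in> ?P \<Longrightarrow> length xs = size M" for xs
    by (simp add: length_finite_permutations_of_multiset)
  have img: "(\<lambda>xs. xs!0) ` ?P \<subseteq> V"
  proof
    fix y assume "y \<in> (\<lambda>xs. xs!0) ` ?P"
    then obtain xs where "xs \<in> ?P" "y = xs!0" by auto
    then have "y \<in> set xs" using lenP sM by auto
    then show "y \<in> V" using \<open>xs \<in> ?P\<close> by (simp add: V_def permutations_of_multiset_def flip: set_mset_mset)
  qed
  have group: "sum g ?P = (\<Sum>u\<in>V. sum g (A u))" for g :: "'a list \<Rightarrow> real"
    unfolding A_def using sum.group[OF finite_permutations_of_multiset finV img, of g] by simp
  have cardP: "real (card ?P) = (\<Sum>u\<in>V. real (card (A u)))"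
    using group[of "\<lambda>_. 1"] by simp
  have reA: "A u = (#) u ` permutations_of_multiset (M - {#u#})" if "u \<in> V" for u
    unfolding A_def by (rule perm_A_reindex) (use that V_def in auto)
  have cardApos: "card (A u) > 0" if "u \<in> V" for u
    using reA[OF that] perm_nonempty finA[of u] by (auto simp: card_gt_0_iff)
  have inner: "(\<Sum>xs\<in>A u. (f xs - mu u)^2) \<le> card (A u) * n * L^2" if u: "u \<in> V" for u
  proof -
    let ?Q = "permutations_of_multiset (M - {#u#})"
    have inj: "inj_on ((#) u) ?Q" by (auto simp: inj_on_def)
    have sz: "n = size (M - {#u#})" using Suc(2) u V_def by (simp add: size_Diff_submset)
    have reid: "sum g (A u) = (\<Sum>ys\<in>?Q. g (u # ys))" for g :: "'a list \<Rightarrow> real"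
      by (simp add: reA[OF u] sum.reindex[OF inj])
    have cA: "card (A u) = card ?Q" by (simp add: reA[OF u] card_image[OF inj])
    have IH: "(\<Sum>ys\<in>?Q. ((\<lambda>ys. f (u#ys)) ys - sum (\<lambda>ys. f (u#ys)) ?Q / card ?Q)^2) \<le> real (card ?Q) * real (size (M - {#u#})) * L^2"
    proof (rule Suc(1)[OF sz])
      fix ys p q assume ys: "ys \<in> ?Q" and p: "p < size (M - {#u#})" and q: "q < size (M - {#u#})"
      have "u # ys \<in> ?P" using ys u V_def by (simp add: permutations_of_multiset_Cons_iff)
      moreover have "Suc p < size M" "Suc q < size M" using p q sz Suc(2) by auto
      ultimately have "\<bar>f (lswap (u#ys) (Suc p) (Suc q)) - f (u#ys)\<bar> \<le> L" by (rule Suc(3))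
      then show "\<bar>f (u # lswap ys p q) - f (u # ys)\<bar> \<le> L" by (simp add: lswap_Cons)
    qed
    have "mu u = sum (\<lambda>ys. f (u#ys)) ?Q / card ?Q" unfolding mu_def by (simp add: reid cA)
    then show ?thesis using IH sz[symmetric] by (simp add: reid cA)
  qed
  have md: "\<bar>mu w - mu v\<bar> \<le> L" if "v \<in> V" "w \<in> V" for v w
  proof (cases "v = w")
    case True
    have "0 \<le> \<bar>f (lswap [] 0 0) - f []\<bar>" by simp
    obtain xs where "xs \<in> ?P" using perm_nonempty by blast
    then have "\<bar>f (lswap xs 0 0) - f xs\<bar> \<le> L" using sM by (intro Suc(3)) auto
    then have "0 \<le> L" by linarith
    then show ?thesis using True by simp
  next
    case False
    show ?thesis unfolding mu_def A_def
      by (rule mean_diff[OF Suc(3)]) (use that False V_def in auto)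
  qed
  have mmu: "\<bar>mu v - mm\<bar> \<le> L" if v: "v \<in> V" for v
  proof -
    have cP: "real (card ?P) > 0" using cardP cardApos v finV
      by (metis card_gt_0_iff empty_iff finite_permutations_of_multiset of_nat_0_less_iff perm_nonempty)
    have "sum f ?P = (\<Sum>u\<in>V. card (A u) * mu u)"
      unfolding group mu_def using cardApos by (intro sum.cong) auto
    then have "mu v - mm = (\<Sum>u\<in>V. card (A u) * (mu v - mu u)) / card ?P"
      unfolding mm_def using cP cardP
      by (simp add: field_simps sum_subtractf sum_distrib_left sum_distrib_right)
    also have "\<bar>\<dots>\<bar> \<le> (\<Sum>u\<in>V. card (A u) * L) / card ?P"
    proof -
      have "\<bar>\<Sum>u\<in>V. card (A u) * (mu v - mu u)\<bar> \<le> (\<Sum>u\<in>V. \<bar>card (A u) * (mu v - mu u)\<bar>)"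
        by (rule sum_abs)
      also have "\<dots> \<le> (\<Sum>u\<in>V. card (A u) * L)"
        using md[OF _ v] by (intro sum_mono) (simp add: abs_mult abs_minus_commute mult_left_mono)
      finally show ?thesis using cP by (simp add: divide_right_mono)
    qed
    also have "\<dots> = L" using cP cardP by (simp add: sum_distrib_right[symmetric])
    finally show ?thesis .
  qed
  have "(\<Sum>xs\<in>?P. (f xs - mm)^2) = (\<Sum>u\<in>V. \<Sum>xs\<in>A u. (f xs - mm)^2)" by (rule group)
  also have "\<dots> = (\<Sum>u\<in>V. (\<Sum>xs\<in>A u. (f xs - mu u)^2) + card (A u) * (mu u - mm)^2)"
    unfolding mu_def by (intro sum.cong refl sq_decomp finA)
  also have "\<dots> \<le> (\<Sum>u\<in>V. card (A u) * n * L^2 + card (A u) * L^2)"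
  proof (intro sum_mono add_mono inner)
    fix u assume u: "u \<in> V"
    have "(mu u - mm)^2 \<le> L^2" using mmu[OF u] by (metis abs_ge_zero power2_abs power_mono)
    then show "card (A u) * (mu u - mm)^2 \<le> card (A u) * L^2" by (simp add: mult_left_mono)
  qed
  also have "\<dots> = card ?P * Suc n * L^2"
    using cardP by (simp add: algebra_simps sum.distrib sum_distrib_left sum_distrib_right)
  finally show ?case using Suc(2) by (simp add: mm_def)
qed




definition PIn :: "nat \<Rightarrow> (nat \<times> nat) set" where
  "PIn n = {(i,j). i < j \<and> j < n}"

lemma finite_PIn[simp]: "finite (PIn n)"
  by (rule finite_subset[of _ "{..<n} \<times> {..<n}"]) (auto simp: PIn_def)

definition ind :: "nat list \<Rightarrow> nat \<times> nat \<Rightarrow> real" where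
  "ind xs st = (if xs ! snd st < xs ! fst st then 1 else 0)"

lemma inv_sum: "real (inv_count xs) = (\<Sum>st\<in>PIn (length xs). ind xs st)"
proof -
  have "{(i,j). i < j \<and> j < length xs \<and> xs!i > xs!j} = {st \<in> PIn (length xs). xs ! snd st < xs ! fst st}"
    by (auto simp: PIn_def)
  then have "real (inv_count xs) = (\<Sum>st\<in>{st \<in> PIn (length xs). xs ! snd st < xs ! fst st}. 1)"
    by (simp add: inv_count_def)
  also have "\<dots> = (\<Sum>st\<in>PIn (length xs). ind xs st)"
    by (subst sum.inter_filter) (auto simp: ind_def)
  finally show ?thesis .
qed

lemma sum_support_bound:
  fixes g :: "'b \<Rightarrow> real"
  assumes "finite A" "\<And>x. x \<in> A \<Longrightarrow> x \<notin> B \<Longrightarrow> g x = 0" "\<And>x. x \<in> A \<Longrightarrow> \<bar>g x\<bar> \<le> c"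
  shows "\<bar>sum g A\<bar> \<le> c * card (A \<inter> B)"
proof -
  have "sum g A = sum g (A \<inter> B)"
    by (rule sum.mono_neutral_right) (use assms in auto)
  also have "\<bar>\<dots>\<bar> \<le> (\<Sum>x\<in>A \<inter> B. \<bar>g x\<bar>)" by (rule sum_abs)
  also have "\<dots> \<le> (\<Sum>x\<in>A \<inter> B. c)" by (rule sum_mono) (use assms in auto)
  finally show ?thesis by (simp add: mult.commute)
qed

lemma card_touch:
  assumes "finite Q"
  shows "card (PIn n \<inter> {(s,t). s \<in> Q \<or> t \<in> Q}) \<le> 2 * card Q * n"
proof -
  have "PIn n \<inter> {(s,t). s \<in> Q \<or> t \<in> Q} \<subseteq> (Q \<times> {..<n}) \<union> ({..<n} \<times> Q)"
    by (auto simp: PIn_def)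
  then have "card (PIn n \<inter> {(s,t). s \<in> Q \<or> t \<in> Q}) \<le> card ((Q \<times> {..<n}) \<union> ({..<n} \<times> Q))"
    by (intro card_mono) (use assms in auto)
  also have "\<dots> \<le> card (Q \<times> {..<n}) + card ({..<n} \<times> Q)" by (rule card_Un_le)
  also have "\<dots> = 2 * card Q * n" by (simp add: card_cartesian_product)
  finally show ?thesis .
qed

lemma inv_L1:
  assumes len: "length ys = length xs" and fQ: "finite Q" and eq: "\<And>m. m \<notin> Q \<Longrightarrow> ys!m = xs!m"
  shows "\<bar>real (inv_count ys) - real (inv_count xs)\<bar> \<le> 2 * card Q * length xs"
proof -
  let ?n = "length xs"
  have "real (inv_count ys) - real (inv_count xs) = (\<Sum>st\<in>PIn ?n. ind ys st - ind xs st)"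
    by (simp add: inv_sum len sum_subtractf)
  also have "\<bar>\<dots>\<bar> \<le> 1 * real (card (PIn ?n \<inter> {(s,t). s \<in> Q \<or> t \<in> Q}))"
    by (rule sum_support_bound) (auto simp: ind_def eq)
  also have "\<dots> \<le> 2 * card Q * ?n" using card_touch[OF fQ, of ?n] by linarith
  finally show ?thesis by simp
qed

lemma inv_L2:
  assumes len: "length ys = length xs" and fQ: "finite Q" and eq: "\<And>m. m \<notin> Q \<Longrightarrow> ys!m = xs!m"
    and p: "p < length xs" "p \<notin> Q" and q: "q < length xs" "q \<notin> Q"
  shows "\<bar>(real (inv_count (lswap ys p q)) - real (inv_count ys)) - (real (inv_count (lswap xs p q)) - real (inv_count xs))\<bar>
           \<le> 2 * (card Q + 2)^2"
proof -
  let ?n = "length xs"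
  let ?Q2 = "Q \<union> {p,q}"
  let ?g = "\<lambda>st. (ind (lswap ys p q) st - ind ys st) - (ind (lswap xs p q) st - ind xs st)"
  have "(real (inv_count (lswap ys p q)) - real (inv_count ys)) - (real (inv_count (lswap xs p q)) - real (inv_count xs))
       = (\<Sum>st\<in>PIn ?n. ?g st)"
    by (simp add: inv_sum len sum_subtractf)
  also have "\<bar>\<dots>\<bar> \<le> 2 * real (card (PIn ?n \<inter> (?Q2 \<times> ?Q2)))"
  proof (rule sum_support_bound)
    fix st assume st: "st \<in> PIn ?n" "st \<notin> ?Q2 \<times> ?Q2"
    obtain s t where st': "st = (s,t)" "s < ?n" "t < ?n" using st(1) by (auto simp: PIn_def)
    have ysp: "ys!p = xs!p" "ys!q = xs!q" using eq p q by auto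
    show "?g st = 0"
    proof (cases "s \<notin> Q \<and> t \<notin> Q")
      case True
      then show ?thesis using st' p q len ysp eq by (simp add: ind_def lswap_nth)
    next
      case False
      then have "s \<notin> {p,q} \<and> t \<notin> {p,q}" using st st' p q by auto
      then show ?thesis using st' p q len by (simp add: ind_def lswap_nth)
    qed
  next
    fix st show "\<bar>?g st\<bar> \<le> 2" by (simp add: ind_def)
  qed simp
  also have "\<dots> \<le> 2 * real ((card Q + 2) * (card Q + 2))"
  proof -
    have c2: "card {p,q} \<le> 2" by (simp add: card_insert_if)
    have "card ?Q2 \<le> card Q + card {p,q}" by (rule card_Un_le)
    then have c3: "card ?Q2 \<le> card Q + 2" using c2 by simp
    have "card (PIn ?n \<inter> (?Q2 \<times> ?Q2)) \<le> card (?Q2 \<times> ?Q2)"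
      by (intro card_mono) (use fQ in auto)
    also have "\<dots> = card ?Q2 * card ?Q2" by (rule card_cartesian_product)
    also have "\<dots> \<le> (card Q + 2) * (card Q + 2)" using c3 by (intro mult_mono) auto
    finally have c4: "card (PIn ?n \<inter> (?Q2 \<times> ?Q2)) \<le> (card Q + 2) * (card Q + 2)" .
    then have "real (card (PIn ?n \<inter> (?Q2 \<times> ?Q2))) \<le> real ((card Q + 2) * (card Q + 2))"
      by (simp only: of_nat_le_iff)
    then show ?thesis by linarith
  qed
  finally show ?thesis by (simp add: power2_eq_square)
qed




lemma ps_length[simp]: "length (pi_star xs i j k l) = length xs"
  by (simp add: pi_star_def Let_def)

lemma ps_nth_out: "m \<notin> {i,j,k,l} \<Longrightarrow> pi_star xs i j k l ! m = xs ! m"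
  by (simp add: pi_star_def Let_def nth_list_update)

lemma lswap_nth_other: "p \<noteq> r \<Longrightarrow> q \<noteq> r \<Longrightarrow> lswap xs p q ! r = xs ! r"
  by (simp add: lswap_def)

lemma lswap_upd: "p \<noteq> m \<Longrightarrow> q \<noteq> m \<Longrightarrow> (lswap xs p q)[m := v] = lswap (xs[m := v]) p q"
  by (simp add: lswap_def list_update_swap)

lemma ps_swap:
  assumes "p \<notin> {i,j,k,l}" "q \<notin> {i,j,k,l}"
  shows "pi_star (lswap xs p q) i j k l = lswap (pi_star xs i j k l) p q"
proof -
  have ne: "p \<noteq> i" "p \<noteq> j" "p \<noteq> k" "p \<noteq> l" "q \<noteq> i" "q \<noteq> j" "q \<noteq> k" "q \<noteq> l"
    using assms by auto
  show ?thesis unfolding pi_star_def Let_def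
    by (simp only: lswap_nth_other lswap_upd ne if_distrib[where f="\<lambda>x. lswap x p q"] simp_thms)
qed

definition Dl :: "nat list \<Rightarrow> nat \<Rightarrow> nat \<Rightarrow> nat \<Rightarrow> nat \<Rightarrow> real" where
  "Dl xs i j k l = real (inv_count (pi_star xs i j k l)) - real (inv_count xs)"

lemma card4: "card {i,j,k,l::nat} \<le> 4"
  by (simp add: card_insert_if)

lemma Dl_bound: "\<bar>Dl xs i j k l\<bar> \<le> 8 * length xs"
proof -
  have "\<bar>Dl xs i j k l\<bar> \<le> real (2 * card {i,j,k,l} * length xs)"
    unfolding Dl_def by (rule inv_L1) (auto simp: ps_nth_out)
  moreover have "2 * card {i,j,k,l} * length xs \<le> 8 * length xs"
    using card4[of i j k l] by simp
  ultimately show ?thesis by (metis (mono_tags, lifting) of_nat_le_iff order_trans of_nat_mult of_nat_numeral)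
qed

lemma Dl_swap:
  assumes "p < length xs" "q < length xs" "p \<notin> {i,j,k,l}" "q \<notin> {i,j,k,l}"
  shows "\<bar>Dl (lswap xs p q) i j k l - Dl xs i j k l\<bar> \<le> 72"
proof -
  let ?ys = "pi_star xs i j k l"
  have "Dl (lswap xs p q) i j k l - Dl xs i j k l
     = (real (inv_count (lswap ?ys p q)) - real (inv_count ?ys)) - (real (inv_count (lswap xs p q)) - real (inv_count xs))"
    unfolding Dl_def using assms by (simp add: ps_swap)
  also have "\<bar>\<dots>\<bar> \<le> 2 * (card {i,j,k,l} + 2)^2"
    by (rule inv_L2) (use assms in \<open>auto simp: ps_nth_out\<close>)
  also have "\<dots> \<le> 72"
  proof -
    have "real (card {i,j,k,l}) \<le> 4" using card4[of i j k l] by simp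
    then have "(real (card {i,j,k,l}) + 2)^2 \<le> 6^2" by (intro power_mono) auto
    then show ?thesis by (simp add: add.commute)
  qed
  finally show ?thesis .
qed




definition M0 :: "nat \<Rightarrow> (nat \<Rightarrow> nat) \<Rightarrow> nat multiset" where
  "M0 h cnt = (\<Sum>a\<in>{1..h}. replicate_mset (cnt a) a)"

lemma count_M0: "count (M0 h cnt) a = (if a \<in> {1..h} then cnt a else 0)"
  unfolding M0_def count_sum by (simp add: sum.delta)

lemma msperms_eq: "msperms h cnt = permutations_of_multiset (M0 h cnt)"
proof (intro set_eqI iffI)
  fix xs assume xs: "xs \<in> msperms h cnt"
  have "count (mset xs) a = count (M0 h cnt) a" for a
  proof (cases "a \<in> {1..h}")
    case True then show ?thesis using xs by (simp add: msperms_def count_mset count_M0)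
  next
    case False
    then have "a \<notin> set xs" using xs by (auto simp: msperms_def)
    then have "count_list xs a = 0" by simp
    then show ?thesis using False by (simp only: count_mset count_M0 if_False)
  qed
  then show "xs \<in> permutations_of_multiset (M0 h cnt)"
    by (simp add: permutations_of_multiset_def multiset_eq_iff)
next
  fix xs assume "xs \<in> permutations_of_multiset (M0 h cnt)"
  then have c: "count_list xs a = (if a \<in> {1..h} then cnt a else 0)" for a
    by (simp add: permutations_of_multiset_def count_mset[symmetric] count_M0)
  have s: "set xs \<subseteq> {1..h}"
  proof
    fix a assume "a \<in> set xs"
    then have "count_list xs a \<noteq> 0" by (simp add: count_list_0_iff)
    then show "a \<in> {1..h}" using c[of a] by (auto split: if_splits)
  qed
  have "length xs = (\<Sum>a\<in>{1..h}. count_list xs a)" using sum_count_set[OF s] by simp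
  also have "\<dots> = (\<Sum>a=1..h. cnt a)" by (rule sum.cong) (auto simp: c)
  finally show "xs \<in> msperms h cnt" using s c by (simp add: msperms_def)
qed

lemma msperms_props:
  assumes "xs \<in> msperms h cnt"
  shows "length xs = (\<Sum>a=1..h. cnt a)" "set xs \<subseteq> {1..h}" "\<And>a. a \<in> {1..h} \<Longrightarrow> count_list xs a = cnt a"
  using assms by (auto simp: msperms_def)

lemma card_pos_eq:
  assumes "xs \<in> msperms h cnt" "a \<in> {1..h}"
  shows "card {k. k < length xs \<and> xs!k = a} = cnt a"
proof -
  have "card {k. k < length xs \<and> xs!k = a} = length (filter ((=) a) xs)"
    by (simp add: length_filter_conv_card eq_commute)
  also have "\<dots> = count_list xs a" by (simp add: count_list_eq_length_filter)
  finally show ?thesis using msperms_props(3)[OF assms] by simp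
qed

definition PJ :: "nat \<Rightarrow> (nat \<times> nat) set" where
  "PJ h = {(a,b). 1 \<le> b \<and> b < a \<and> a \<le> h}"

lemma finite_PJ[simp]: "finite (PJ h)"
  by (rule finite_subset[of _ "{..h} \<times> {..h}"]) (auto simp: PJ_def)

definition KL :: "nat list \<Rightarrow> (nat \<times> nat) set" where
  "KL xs = {(k,l). k < length xs \<and> l < length xs \<and> xs!l < xs!k}"

lemma finite_KL[simp]: "finite (KL xs)"
  by (rule finite_subset[of _ "{..<length xs} \<times> {..<length xs}"]) (auto simp: KL_def)

lemma KL_group:
  fixes g :: "nat \<Rightarrow> nat \<Rightarrow> real"
  assumes xs: "xs \<in> msperms h cnt"
  shows "(\<Sum>(a,b)\<in>PJ h. \<Sum>k\<in>{k. k < length xs \<and> xs!k = a}. \<Sum>l\<in>{k. k < length xs \<and> xs!k = b}. g k l)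
        = (\<Sum>(k,l)\<in>KL xs. g k l)"
proof -
  let ?f = "\<lambda>(k,l). (xs!k, xs!l)"
  have img: "?f ` KL xs \<subseteq> PJ h"
  proof
    fix y assume "y \<in> ?f ` KL xs"
    then obtain k l where "y = (xs!k, xs!l)" "k < length xs" "l < length xs" "xs!l < xs!k"
      by (auto simp: KL_def)
    moreover have "xs!k \<in> {1..h}" "xs!l \<in> {1..h}"
      using msperms_props(2)[OF xs] \<open>k < length xs\<close> \<open>l < length xs\<close> by (auto dest!: nth_mem)
    ultimately show "y \<in> PJ h" by (auto simp: PJ_def)
  qed
  have "(\<Sum>(k,l)\<in>KL xs. g k l) = (\<Sum>y\<in>PJ h. \<Sum>x\<in>{x \<in> KL xs. ?f x = y}. case x of (k,l) \<Rightarrow> g k l)"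
    using sum.group[OF finite_KL finite_PJ img, of "\<lambda>(k,l). g k l"] by simp
  also have "\<dots> = (\<Sum>(a,b)\<in>PJ h. \<Sum>k\<in>{k. k < length xs \<and> xs!k = a}. \<Sum>l\<in>{k. k < length xs \<and> xs!k = b}. g k l)"
  proof (rule sum.cong[OF refl])
    fix y assume "y \<in> PJ h"
    then obtain a b where y: "y = (a,b)" "b < a" by (auto simp: PJ_def)
    have "{x \<in> KL xs. ?f x = y} = {k. k < length xs \<and> xs!k = a} \<times> {k. k < length xs \<and> xs!k = b}"
      using y by (auto simp: KL_def)
    then show "(\<Sum>x\<in>{x \<in> KL xs. ?f x = y}. case x of (k,l) \<Rightarrow> g k l)
        = (case y of (a,b) \<Rightarrow> \<Sum>k\<in>{k. k < length xs \<and> xs!k = a}. \<Sum>l\<in>{k. k < length xs \<and> xs!k = b}. g k l)"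
      using y by (simp add: sum.cartesian_product)
  qed
  finally show ?thesis by simp
qed

definition Sc :: "nat \<Rightarrow> (nat \<Rightarrow> nat) \<Rightarrow> real" where
  "Sc h cnt = (\<Sum>(a,b)\<in>PJ h. real (cnt a * cnt b))"

lemma card_KL:
  assumes xs: "xs \<in> msperms h cnt"
  shows "real (card (KL xs)) = Sc h cnt"
proof -
  have "real (card (KL xs)) = (\<Sum>(k,l)\<in>KL xs. (1::real))" by simp
  also have "\<dots> = (\<Sum>(a,b)\<in>PJ h. \<Sum>k\<in>{k. k < length xs \<and> xs!k = a}. \<Sum>l\<in>{k. k < length xs \<and> xs!k = b}. (1::real))"
    using KL_group[OF xs, of "\<lambda>_ _. 1"] by simp
  also have "\<dots> = Sc h cnt" unfolding Sc_def
    by (rule sum.cong[OF refl]) (auto simp: PJ_def card_pos_eq[OF xs])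
  finally show ?thesis .
qed

lemma PJ_Suc: "PJ (Suc h) = PJ h \<union> (\<lambda>b. (Suc h, b)) ` {1..h}"
  by (auto simp: PJ_def)

lemma sq_identity:
  "(\<Sum>a=1..h. real (c a))^2 = (\<Sum>a=1..h. real (c a)^2) + 2 * (\<Sum>(a,b)\<in>PJ h. real (c a * c b))"
proof (induction h)
  case 0
  have "PJ 0 = {}" by (auto simp: PJ_def)
  then show ?case by simp
next
  case (Suc h)
  have disj: "PJ h \<inter> (\<lambda>b. (Suc h, b)) ` {1..h} = {}" by (auto simp: PJ_def)
  have disj': "(Suc h, x) \<notin> PJ h" for x by (auto simp: PJ_def)
  have "(\<Sum>(a,b)\<in>PJ (Suc h). real (c a * c b)) = (\<Sum>(a,b)\<in>PJ h. real (c a * c b)) + (\<Sum>b=1..h. real (c (Suc h) * c b))"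
    unfolding PJ_Suc by (subst sum.union_disjoint) (auto simp: disj disj' sum.reindex inj_on_def)
  then show ?case using Suc
    by (simp add: power2_eq_square algebra_simps sum_distrib_left sum_distrib_right)
qed

lemma card_PIn: "2 * card (PIn n) = n * (n - 1)"
proof (induction n)
  case 0 then show ?case by (simp add: PIn_def)
next
  case (Suc n)
  have e: "PIn (Suc n) = PIn n \<union> (\<lambda>i. (i, n)) ` {..<n}" by (auto simp: PIn_def)
  have d: "PIn n \<inter> (\<lambda>i. (i, n)) ` {..<n} = {}" by (auto simp: PIn_def)
  have "card (PIn (Suc n)) = card (PIn n) + n"
    unfolding e by (subst card_Un_disjoint) (auto simp: d card_image inj_on_def)
  then show ?case using Suc by (cases n) (auto simp: algebra_simps)
qed




definition phi :: "nat list \<Rightarrow> nat \<times> nat \<Rightarrow> nat \<times> nat \<Rightarrow> real" where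
  "phi xs ij kl = (if xs ! snd ij < xs ! fst ij then 0 else Dl xs (fst ij) (snd ij) (fst kl) (snd kl))"

lemma cd_rewrite:
  assumes pos: "\<forall>a\<in>{1..h}. 0 < cnt a" and xs: "xs \<in> msperms h cnt"
  shows "cond_drift h cnt xs = (\<Sum>ij\<in>PIn (length xs). \<Sum>kl\<in>KL xs. phi xs ij kl) / (real (card (PIn (length xs))) * Sc h cnt)"
proof -
  let ?n = "length xs"
  let ?N = "real (card (PIn ?n))"
  let ?S = "Sc h cnt"
  have inner: "(\<Sum>(a,b)\<in>PJ h. real (cnt a * cnt b) / ?S *
            (\<Sum>is\<in>{k. k < ?n \<and> xs!k = a}. \<Sum>js\<in>{k. k < ?n \<and> xs!k = b}.
               1 / real (cnt a * cnt b) * Dl xs i j is js))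
        = (\<Sum>(k,l)\<in>KL xs. Dl xs i j k l) / ?S" for i j
  proof -
    have "(\<Sum>(a,b)\<in>PJ h. real (cnt a * cnt b) / ?S *
            (\<Sum>is\<in>{k. k < ?n \<and> xs!k = a}. \<Sum>js\<in>{k. k < ?n \<and> xs!k = b}.
               1 / real (cnt a * cnt b) * Dl xs i j is js))
        = (\<Sum>(a,b)\<in>PJ h. (\<Sum>is\<in>{k. k < ?n \<and> xs!k = a}. \<Sum>js\<in>{k. k < ?n \<and> xs!k = b}. Dl xs i j is js) / ?S)"
    proof (rule sum.cong[OF refl])
      fix ab assume "ab \<in> PJ h"
      then obtain a b where ab: "ab = (a,b)" "a \<in> {1..h}" "b \<in> {1..h}" by (auto simp: PJ_def)
      then have c: "real (cnt a * cnt b) \<noteq> 0" using pos by auto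
      show "(case ab of (a,b) \<Rightarrow> real (cnt a * cnt b) / ?S *
            (\<Sum>is\<in>{k. k < ?n \<and> xs!k = a}. \<Sum>js\<in>{k. k < ?n \<and> xs!k = b}.
               1 / real (cnt a * cnt b) * Dl xs i j is js))
          = (case ab of (a,b) \<Rightarrow> (\<Sum>is\<in>{k. k < ?n \<and> xs!k = a}. \<Sum>js\<in>{k. k < ?n \<and> xs!k = b}. Dl xs i j is js) / ?S)"
      proof -
        have e: "(\<Sum>is\<in>{k. k < ?n \<and> xs!k = a}. \<Sum>js\<in>{k. k < ?n \<and> xs!k = b}.
               1 / real (cnt a * cnt b) * Dl xs i j is js) = 1 / real (cnt a * cnt b) * 
               (\<Sum>is\<in>{k. k < ?n \<and> xs!k = a}. \<Sum>js\<in>{k. k < ?n \<and> xs!k = b}. Dl xs i j is js)"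
          by (simp only: sum_distrib_left)
        show ?thesis unfolding ab prod.case e using c by simp
      qed
    qed
    also have "\<dots> = (\<Sum>(a,b)\<in>PJ h. \<Sum>is\<in>{k. k < ?n \<and> xs!k = a}. \<Sum>js\<in>{k. k < ?n \<and> xs!k = b}. Dl xs i j is js) / ?S"
      by (simp add: sum_divide_distrib case_prod_beta)
    also have "\<dots> = (\<Sum>(k,l)\<in>KL xs. Dl xs i j k l) / ?S"
      using KL_group[OF xs, of "Dl xs i j"] by simp
    finally show ?thesis .
  qed
  have "cond_drift h cnt xs = (\<Sum>(i,j)\<in>PIn ?n. 1 / ?N * (if xs!i > xs!j then 0 else
           (\<Sum>(a,b)\<in>PJ h. real (cnt a * cnt b) / ?S *
            (\<Sum>is\<in>{k. k < ?n \<and> xs!k = a}. \<Sum>js\<in>{k. k < ?n \<and> xs!k = b}.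
               1 / real (cnt a * cnt b) * Dl xs i j is js))))"
    unfolding cond_drift_def Let_def PIn_def[symmetric] PJ_def[symmetric] Sc_def[symmetric] Dl_def ..
  also have "\<dots> = (\<Sum>ij\<in>PIn ?n. (\<Sum>kl\<in>KL xs. phi xs ij kl) / (?N * ?S))"
  proof (rule sum.cong[OF refl])
    fix ij assume "ij \<in> PIn ?n"
    obtain i j where ij: "ij = (i,j)" by (cases ij)
    show "(case ij of (i,j) \<Rightarrow> 1 / ?N * (if xs!i > xs!j then 0 else
           (\<Sum>(a,b)\<in>PJ h. real (cnt a * cnt b) / ?S *
            (\<Sum>is\<in>{k. k < ?n \<and> xs!k = a}. \<Sum>js\<in>{k. k < ?n \<and> xs!k = b}.
               1 / real (cnt a * cnt b) * Dl xs i j is js))))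
        = (\<Sum>kl\<in>KL xs. phi xs ij kl) / (?N * ?S)"
      unfolding ij inner by (simp add: phi_def case_prod_beta)
  qed
  also have "\<dots> = (\<Sum>ij\<in>PIn ?n. \<Sum>kl\<in>KL xs. phi xs ij kl) / (?N * ?S)"
    by (simp add: sum_divide_distrib)
  finally show ?thesis .
qed




lemma abs_sum_le:
  fixes g :: "'b \<Rightarrow> real"
  assumes "\<And>x. x \<in> X \<Longrightarrow> \<bar>g x\<bar> \<le> c"
  shows "\<bar>sum g X\<bar> \<le> real (card X) * c"
proof (cases "finite X")
  case True
  have "\<bar>sum g X\<bar> \<le> (\<Sum>x\<in>X. \<bar>g x\<bar>)" by (rule sum_abs)
  also have "\<dots> \<le> (\<Sum>x\<in>X. c)" by (rule sum_mono) (use assms in auto)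
  finally show ?thesis by simp
next
  case False then show ?thesis by simp
qed

lemma card_touch2:
  assumes "A \<subseteq> {..<n} \<times> {..<n}" "finite Q"
  shows "card (A \<inter> {(s,t). s \<in> Q \<or> t \<in> Q}) \<le> 2 * card Q * n"
proof -
  have "A \<inter> {(s,t). s \<in> Q \<or> t \<in> Q} \<subseteq> (Q \<times> {..<n}) \<union> ({..<n} \<times> Q)"
    using assms by auto
  then have "card (A \<inter> {(s,t). s \<in> Q \<or> t \<in> Q}) \<le> card ((Q \<times> {..<n}) \<union> ({..<n} \<times> Q))"
    by (intro card_mono) (use assms in auto)
  also have "\<dots> \<le> card (Q \<times> {..<n}) + card ({..<n} \<times> Q)" by (rule card_Un_le)
  also have "\<dots> = 2 * card Q * n" by (simp add: card_cartesian_product)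
  finally show ?thesis .
qed

lemma card_touch_pq:
  assumes "A \<subseteq> {..<n} \<times> {..<n}"
  shows "real (card (A \<inter> {(s,t). s \<in> {p,q} \<or> t \<in> {p,q}})) \<le> 4 * real n"
proof -
  have "card (A \<inter> {(s,t). s \<in> {p,q} \<or> t \<in> {p,q}}) \<le> 2 * card {p,q} * n"
    by (rule card_touch2[OF assms]) simp
  also have "\<dots> \<le> 2 * 2 * n" by (intro mult_right_mono mult_left_mono) (auto simp: card_insert_if)
  finally show ?thesis by simp
qed

definition Fsum :: "nat list \<Rightarrow> real" where
  "Fsum xs = (\<Sum>ij\<in>PIn (length xs). \<Sum>kl\<in>KL xs. phi xs ij kl)"

lemma Fsum_alt: "Fsum xs = (\<Sum>t\<in>PIn (length xs) \<times> KL xs. phi xs (fst t) (snd t))"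
  unfolding Fsum_def by (simp add: sum.cartesian_product case_prod_beta)

lemma phi_bound: "\<bar>phi xs ij kl\<bar> \<le> 8 * real (length xs)"
  unfolding phi_def using Dl_bound by auto

lemma lswap_msperms:
  assumes "xs \<in> msperms h cnt" "p < length xs" "q < length xs"
  shows "lswap xs p q \<in> msperms h cnt"
  using assms by (simp add: msperms_eq permutations_of_multiset_def mset_lswap)

lemma Fsum_lip:
  assumes xs: "xs \<in> msperms h cnt" and p: "p < length xs" and q: "q < length xs"
  shows "\<bar>Fsum (lswap xs p q) - Fsum xs\<bar>
     \<le> 72 * real (card (PIn (length xs))) * Sc h cnt
        + 64 * real (length xs)^2 * Sc h cnt + 64 * real (length xs)^2 * real (card (PIn (length xs)))"
proof -
  let ?n = "length xs"
  let ?xs' = "lswap xs p q"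
  let ?N = "real (card (PIn ?n))"
  let ?S = "Sc h cnt"
  have xs': "?xs' \<in> msperms h cnt" by (rule lswap_msperms[OF xs p q])
  have len': "length ?xs' = ?n" by simp
  define U where "U = (\<lambda>ys. PIn ?n \<times> KL ys)"
  define Gd where "Gd = {t :: (nat \<times> nat) \<times> (nat \<times> nat). fst (fst t) \<notin> {p,q} \<and> snd (fst t) \<notin> {p,q} \<and> fst (snd t) \<notin> {p,q} \<and> snd (snd t) \<notin> {p,q}}"
  define B where "B = {(s::nat,t::nat). s \<in> {p,q} \<or> t \<in> {p,q}}"
  have finU: "finite (U ys)" for ys unfolding U_def by simp
  have UG: "U ?xs' \<inter> Gd = U xs \<inter> Gd"
    unfolding U_def Gd_def KL_def by (auto simp: lswap_nth_other)
  have KLsub: "KL ys \<subseteq> {..<length ys} \<times> {..<length ys}" for ys by (auto simp: KL_def)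
  have PIsub: "PIn ?n \<subseteq> {..<?n} \<times> {..<?n}" by (auto simp: PIn_def)
  have cardU: "real (card (U ys)) = ?N * ?S" if "ys \<in> msperms h cnt" for ys
    unfolding U_def using card_KL[OF that] by (simp add: card_cartesian_product)
  have cardUG: "real (card (U ys - Gd)) \<le> 4 * real ?n * ?S + ?N * (4 * real ?n)"
    if ys: "ys \<in> msperms h cnt" for ys
  proof -
    have leny: "length ys = ?n" using ys xs by (simp add: msperms_props(1))
    have "U ys - Gd \<subseteq> ((PIn ?n \<inter> B) \<times> KL ys) \<union> (PIn ?n \<times> (KL ys \<inter> B))"
      unfolding U_def Gd_def B_def by auto
    then have "card (U ys - Gd) \<le> card (((PIn ?n \<inter> B) \<times> KL ys) \<union> (PIn ?n \<times> (KL ys \<inter> B)))"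
      by (intro card_mono) auto
    also have "\<dots> \<le> card ((PIn ?n \<inter> B) \<times> KL ys) + card (PIn ?n \<times> (KL ys \<inter> B))" by (rule card_Un_le)
    also have "\<dots> = card (PIn ?n \<inter> B) * card (KL ys) + card (PIn ?n) * card (KL ys \<inter> B)"
      by (simp add: card_cartesian_product)
    finally have "real (card (U ys - Gd)) \<le> real (card (PIn ?n \<inter> B)) * real (card (KL ys)) + ?N * real (card (KL ys \<inter> B))"
      by (metis of_nat_add of_nat_le_iff of_nat_mult)
    moreover have "real (card (PIn ?n \<inter> B)) \<le> 4 * real ?n"
      unfolding B_def by (rule card_touch_pq[OF PIsub])
    moreover have "real (card (KL ys \<inter> B)) \<le> 4 * real ?n"
      unfolding B_def using card_touch_pq[OF KLsub[of ys]] leny by simp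
    moreover have "real (card (KL ys)) = ?S" by (rule card_KL[OF ys])
    moreover have "?S \<ge> 0" unfolding Sc_def by (intro sum_nonneg) auto
    ultimately show ?thesis
      by (smt (verit, best) mult_left_mono mult_right_mono of_nat_0_le_iff)
  qed
  have split: "Fsum ys = sum (\<lambda>t. phi ys (fst t) (snd t)) (U ys \<inter> Gd) + sum (\<lambda>t. phi ys (fst t) (snd t)) (U ys - Gd)"
    if "length ys = ?n" for ys
    unfolding Fsum_alt U_def that by (rule sum.Int_Diff) simp
  have "Fsum ?xs' - Fsum xs = (\<Sum>t\<in>U xs \<inter> Gd. phi ?xs' (fst t) (snd t) - phi xs (fst t) (snd t))
      + sum (\<lambda>t. phi ?xs' (fst t) (snd t)) (U ?xs' - Gd) - sum (\<lambda>t. phi xs (fst t) (snd t)) (U xs - Gd)"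
    using split[OF len'] split[OF refl] UG by (simp add: sum_subtractf)
  also have "\<bar>\<dots>\<bar> \<le> real (card (U xs \<inter> Gd)) * 72 + real (card (U ?xs' - Gd)) * (8 * real ?n)
       + real (card (U xs - Gd)) * (8 * real ?n)"
  proof -
    have a: "\<bar>\<Sum>t\<in>U xs \<inter> Gd. phi ?xs' (fst t) (snd t) - phi xs (fst t) (snd t)\<bar> \<le> real (card (U xs \<inter> Gd)) * 72"
    proof (rule abs_sum_le)
      fix t assume t: "t \<in> U xs \<inter> Gd"
      obtain i j k l where tt: "t = ((i,j),(k,l))" by (cases t) auto
      have ij: "i < ?n" "j < ?n" using t tt by (auto simp: U_def PIn_def)
      have nq: "p \<notin> {i,j,k,l}" "q \<notin> {i,j,k,l}" using t tt by (auto simp: Gd_def)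
      have eqv: "?xs' ! i = xs ! i" "?xs' ! j = xs ! j"
        using nq by (auto intro!: lswap_nth_other)
      show "\<bar>phi ?xs' (fst t) (snd t) - phi xs (fst t) (snd t)\<bar> \<le> 72"
        unfolding tt phi_def using eqv Dl_swap[OF p q nq] by simp
    qed
    have b: "\<bar>sum (\<lambda>t. phi ?xs' (fst t) (snd t)) (U ?xs' - Gd)\<bar> \<le> real (card (U ?xs' - Gd)) * (8 * real ?n)"
      by (rule abs_sum_le) (use phi_bound[of ?xs'] in simp)
    have c: "\<bar>sum (\<lambda>t. phi xs (fst t) (snd t)) (U xs - Gd)\<bar> \<le> real (card (U xs - Gd)) * (8 * real ?n)"
      by (rule abs_sum_le) (use phi_bound[of xs] in simp)
    show ?thesis using a b c by linarith
  qed
  also have "\<dots> \<le> (?N * ?S) * 72 + (4 * real ?n * ?S + ?N * (4 * real ?n)) * (8 * real ?n)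
       + (4 * real ?n * ?S + ?N * (4 * real ?n)) * (8 * real ?n)"
  proof -
    have "real (card (U xs \<inter> Gd)) \<le> real (card (U xs))"
      by (simp add: card_mono finU)
    then have "real (card (U xs \<inter> Gd)) \<le> ?N * ?S" using cardU[OF xs] by simp
    then show ?thesis using cardUG[OF xs] cardUG[OF xs']
      by (intro add_mono mult_right_mono) auto
  qed
  also have "\<dots> = 72 * ?N * ?S + 64 * real ?n ^ 2 * ?S + 64 * real ?n ^ 2 * ?N"
    by (simp add: power2_eq_square algebra_simps)
  finally show ?thesis .
qed




theorem lemma2p11:
  shows "\<exists>C::real. \<forall>(h::nat) (cnt::nat \<Rightarrow> nat).
     2 \<le> h \<and> (\<forall>a\<in>{1..h}. 0 < cnt a) \<and> 4 \<le> (\<Sum>a=1..h. cnt a) \<longrightarrow>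
     var_perm h cnt (cond_drift h cnt) \<le>
       C * real (\<Sum>a=1..h. cnt a) ^ 5 /
         (real (\<Sum>a=1..h. cnt a) ^ 2 - (\<Sum>a=1..h. real (cnt a) ^ 2)) ^ 2"
proof (intro exI allI impI)
  fix h :: nat and cnt :: "nat \<Rightarrow> nat"
  assume asm: "2 \<le> h \<and> (\<forall>a\<in>{1..h}. 0 < cnt a) \<and> 4 \<le> (\<Sum>a=1..h. cnt a)"
  then have h2: "2 \<le> h" and pos: "\<forall>a\<in>{1..h}. 0 < cnt a" and n4: "4 \<le> (\<Sum>a=1..h. cnt a)" by auto
  define n where "n = (\<Sum>a=1..h. cnt a)"
  define S where "S = Sc h cnt"
  define N where "N = real (card (PIn n))"
  define L where "L = 400 * real n ^ 2 / S"
  define P where "P = msperms h cnt"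
  have rn: "real n = (\<Sum>a=1..h. real (cnt a))" by (simp add: n_def)
  have Sid: "real n ^ 2 - (\<Sum>a=1..h. real (cnt a) ^ 2) = 2 * S"
    using sq_identity[where c=cnt and h=h] unfolding rn S_def Sc_def by simp
  have sq0: "(\<Sum>a=1..h. real (cnt a) ^ 2) \<ge> 0" by (intro sum_nonneg) auto
  have Sle: "2 * S \<le> real n ^ 2" using Sid sq0 by linarith
  have Spos: "S > 0"
  proof -
    have m: "(2,1) \<in> PJ h" using h2 by (auto simp: PJ_def)
    have "real (cnt 2 * cnt 1) > 0" using pos h2 by auto
    moreover have "real (cnt 2 * cnt 1) \<le> S" unfolding S_def Sc_def
      using member_le_sum[OF m, of "\<lambda>(a,b). real (cnt a * cnt b)"] by (simp split: prod.splits)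
    ultimately show ?thesis by linarith
  qed
  have n4': "4 \<le> n" using n4 n_def by simp
  have rn4: "real n \<ge> 4" using n4' by simp
  have Nge: "4 * N \<ge> real n ^ 2"
  proof -
    have "2 * card (PIn n) = n * (n - 1)" by (rule card_PIn)
    then have "real (2 * card (PIn n)) = real (n * (n - 1))" by (simp only:)
    then have "2 * N = real n * (real n - 1)" unfolding N_def using n4' by (simp add: of_nat_diff)
    moreover have "real n * real n \<ge> 2 * real n" using rn4 by (intro mult_right_mono) auto
    ultimately show ?thesis unfolding power2_eq_square by (simp add: right_diff_distrib)
  qed
  have Npos: "N > 0"
  proof -
    have "real n ^ 2 > 0" using rn4 by simp
    then show ?thesis using Nge by linarith
  qed
  have lenP: "length xs = n" if "xs \<in> P" for xs using that by (simp add: P_def n_def msperms_props(1))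
  have cd: "cond_drift h cnt xs = Fsum xs / (N * S)" if "xs \<in> P" for xs
    using cd_rewrite[OF pos that[unfolded P_def]] lenP[OF that] by (simp add: Fsum_def N_def S_def)
  have lip: "\<bar>cond_drift h cnt (lswap xs p q) - cond_drift h cnt xs\<bar> \<le> L"
    if xs: "xs \<in> P" and p: "p < n" and q: "q < n" for xs p q
  proof -
    have xs': "lswap xs p q \<in> P" using lswap_msperms xs p q lenP[OF xs] by (simp add: P_def)
    have F: "\<bar>Fsum (lswap xs p q) - Fsum xs\<bar> \<le> 72 * N * S + 64 * real n ^ 2 * S + 64 * real n ^ 2 * N"
      using Fsum_lip[of xs h cnt p q] xs p q lenP[OF xs] by (simp add: P_def N_def S_def)
    have "72 * N * S + 64 * real n ^ 2 * S + 64 * real n ^ 2 * N \<le> L * (N * S)"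
    proof -
      have LNS: "L * (N * S) = 400 * real n ^ 2 * N" unfolding L_def using Spos by simp
      have a0: "(36 * N) * (2 * S) \<le> (36 * N) * real n ^ 2"
        by (rule mult_left_mono[OF Sle]) (use Npos in simp)
      have a: "72 * N * S \<le> 36 * real n ^ 2 * N" using a0 by (simp add: algebra_simps)
      have SN: "S \<le> 2 * N" using Sle Nge by linarith
      have b0: "(64 * real n ^ 2) * S \<le> (64 * real n ^ 2) * (2 * N)"
        by (rule mult_left_mono[OF SN]) simp
      have b: "64 * real n ^ 2 * S \<le> 128 * real n ^ 2 * N" using b0 by (simp add: algebra_simps)
      have c: "0 \<le> real n ^ 2 * N" using Npos by simp
      show ?thesis using a b c LNS by linarith
    qed
    then have "\<bar>Fsum (lswap xs p q) - Fsum xs\<bar> \<le> L * (N * S)" using F by linarith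
    moreover have "cond_drift h cnt (lswap xs p q) - cond_drift h cnt xs = (Fsum (lswap xs p q) - Fsum xs) / (N * S)"
      using cd[OF xs] cd[OF xs'] by (simp add: diff_divide_distrib)
    moreover have "N * S > 0" using Npos Spos by simp
    ultimately show ?thesis by (metis abs_div_pos pos_divide_le_eq)
  qed
  have PM: "P = permutations_of_multiset (M0 h cnt)" by (simp add: P_def msperms_eq)
  have sz: "size (M0 h cnt) = n"
  proof -
    obtain xs where "xs \<in> P" using perm_nonempty PM by blast
    then show ?thesis using lenP PM length_finite_permutations_of_multiset by fastforce
  qed
  have VB: "(\<Sum>xs\<in>P. (cond_drift h cnt xs - sum (cond_drift h cnt) P / card P)^2) \<le> real (card P) * real n * L^2"
  proof -
    have "(\<Sum>xs\<in>permutations_of_multiset (M0 h cnt). (cond_drift h cnt xs - sum (cond_drift h cnt) (permutations_of_multiset (M0 h cnt)) / card (permutations_of_multiset (M0 h cnt)))^2)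
       \<le> real (card (permutations_of_multiset (M0 h cnt))) * real (size (M0 h cnt)) * L^2"
    proof (rule var_bound)
      fix xs p q assume "xs \<in> permutations_of_multiset (M0 h cnt)" "p < size (M0 h cnt)" "q < size (M0 h cnt)"
      then show "\<bar>cond_drift h cnt (lswap xs p q) - cond_drift h cnt xs\<bar> \<le> L"
        using lip[of xs p q] unfolding PM sz by blast
    qed
    then show ?thesis unfolding PM[symmetric] sz .
  qed
  have cP: "real (card P) > 0" using perm_nonempty PM by (simp add: card_gt_0_iff)
  have "var_perm h cnt (cond_drift h cnt) = (\<Sum>xs\<in>P. (cond_drift h cnt xs - sum (cond_drift h cnt) P / card P)^2) / card P"
    by (simp add: var_perm_def expect_perm_def P_def)
  also have "\<dots> \<le> real n * L^2" using VB cP by (simp add: divide_le_eq mult.commute mult.left_commute)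
  also have "\<dots> = 640000 * real n ^ 5 / (2 * S) ^ 2"
    unfolding L_def using Spos by (simp add: power2_eq_square field_simps numeral_eq_Suc)
  also have "\<dots> = 640000 * real (\<Sum>a=1..h. cnt a) ^ 5 /
         (real (\<Sum>a=1..h. cnt a) ^ 2 - (\<Sum>a=1..h. real (cnt a) ^ 2)) ^ 2"
    using Sid by (simp add: n_def)
  finally show "var_perm h cnt (cond_drift h cnt) \<le> 640000 * real (\<Sum>a=1..h. cnt a) ^ 5 /
         (real (\<Sum>a=1..h. cnt a) ^ 2 - (\<Sum>a=1..h. real (cnt a) ^ 2)) ^ 2" .
qed


end
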